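(* Let $G=(V,E)$ be a graph of order $n$ such that $\tau(G)=\tau>\frac{n}{2}$. If its $\tau$-set $W$ satisfies $G[W]\cong\overline{K_\tau}$ (i.e. $W$ is an independent set), then $\beta_p(G)=\tau$.
   Context: All graphs are finite, simple, undirected and connected. Two vertices $u,v$ are twins if $N(u)\setminus\{v\}=N(v)\setminus\{u\}$; the twin number $\tau(G)$ is the maximum cardinality of an equivalence class of the twin relation; a $\tau$-set is a set of pairwise twin vertices of cardinality $\tau(G)$ (unique when $\tau(G)>n/2$). For a partition $\Pi=\{S_1,\dots,S_k\}$ of $V(G)$, $r(u|\Pi)=(d(u,S_1),\dots,d(u,S_k))$ with $d(u,S)=\min_{w\in S}d(u,w)$; $\Pi$ is locating if $r(u|\Pi)\ne r(v|\Pi)$ for all distinct $u,v$; $\beta_p(G)$ is the minimum size of a locating partition. *)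

theory Defs
  imports Main
begin

definition simple_graph :: "'a set \<Rightarrow> ('a \<Rightarrow> 'a \<Rightarrow> bool) \<Rightarrow> bool" where
  "simple_graph V E \<longleftrightarrow> finite V \<and> V \<noteq> {} \<and>
     (\<forall>u v. E u v \<longrightarrow> u \<in> V \<and> v \<in> V) \<and>
     (\<forall>u v. E u v \<longrightarrow> E v u) \<and> (\<forall>u. \<not> E u u)"

definition is_walk :: "('a \<Rightarrow> 'a \<Rightarrow> bool) \<Rightarrow> 'a list \<Rightarrow> bool" where
  "is_walk E xs \<longleftrightarrow> xs \<noteq> [] \<and> (\<forall>i. Suc i < length xs \<longrightarrow> E (xs ! i) (xs ! Suc i))"

definition connected_graph :: "'a set \<Rightarrow> ('a \<Rightarrow> 'a \<Rightarrow> bool) \<Rightarrow> bool" where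
  "connected_graph V E \<longleftrightarrow> simple_graph V E \<and>
     (\<forall>u\<in>V. \<forall>v\<in>V. \<exists>xs. is_walk E xs \<and> hd xs = u \<and> last xs = v)"

definition gdist :: "('a \<Rightarrow> 'a \<Rightarrow> bool) \<Rightarrow> 'a \<Rightarrow> 'a \<Rightarrow> nat" where
  "gdist E u v = (LEAST n. \<exists>xs. is_walk E xs \<and> hd xs = u \<and> last xs = v \<and> length xs = Suc n)"

definition setdist :: "('a \<Rightarrow> 'a \<Rightarrow> bool) \<Rightarrow> 'a \<Rightarrow> 'a set \<Rightarrow> nat" where
  "setdist E u S = Min (gdist E u ` S)"

definition nbhd :: "'a set \<Rightarrow> ('a \<Rightarrow> 'a \<Rightarrow> bool) \<Rightarrow> 'a \<Rightarrow> 'a set" where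
  "nbhd V E u = {w \<in> V. E u w}"

definition twins :: "'a set \<Rightarrow> ('a \<Rightarrow> 'a \<Rightarrow> bool) \<Rightarrow> 'a \<Rightarrow> 'a \<Rightarrow> bool" where
  "twins V E u v \<longleftrightarrow> u \<in> V \<and> v \<in> V \<and> nbhd V E u - {v} = nbhd V E v - {u}"

definition twin_class :: "'a set \<Rightarrow> ('a \<Rightarrow> 'a \<Rightarrow> bool) \<Rightarrow> 'a \<Rightarrow> 'a set" where
  "twin_class V E u = {v \<in> V. twins V E u v}"

definition twin_number :: "'a set \<Rightarrow> ('a \<Rightarrow> 'a \<Rightarrow> bool) \<Rightarrow> nat" where
  "twin_number V E = Max ((\<lambda>u. card (twin_class V E u)) ` V)"

definition tau_set :: "'a set \<Rightarrow> ('a \<Rightarrow> 'a \<Rightarrow> bool) \<Rightarrow> 'a set \<Rightarrow> bool" where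
  "tau_set V E W \<longleftrightarrow> W \<subseteq> V \<and> (\<forall>u\<in>W. \<forall>v\<in>W. twins V E u v) \<and> card W = twin_number V E"

definition is_partition :: "'a set \<Rightarrow> 'a set set \<Rightarrow> bool" where
  "is_partition V P \<longleftrightarrow> (\<forall>S\<in>P. S \<noteq> {}) \<and> \<Union>P = V \<and>
     (\<forall>S\<in>P. \<forall>T\<in>P. S \<noteq> T \<longrightarrow> S \<inter> T = {})"

definition rep :: "('a \<Rightarrow> 'a \<Rightarrow> bool) \<Rightarrow> 'a set set \<Rightarrow> 'a \<Rightarrow> 'a set \<Rightarrow> nat" where
  "rep E P u = (\<lambda>S. if S \<in> P then setdist E u S else 0)"

definition locating_partition :: "'a set \<Rightarrow> ('a \<Rightarrow> 'a \<Rightarrow> bool) \<Rightarrow> 'a set set \<Rightarrow> bool" where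
  "locating_partition V E P \<longleftrightarrow> is_partition V P \<and>
     (\<forall>u\<in>V. \<forall>v\<in>V. u \<noteq> v \<longrightarrow> rep E P u \<noteq> rep E P v)"

definition partition_dimension :: "'a set \<Rightarrow> ('a \<Rightarrow> 'a \<Rightarrow> bool) \<Rightarrow> nat" where
  "partition_dimension V E = (LEAST k. \<exists>P. locating_partition V E P \<and> card P = k)"

end

theory Submission imports Defs begin

lemma gdist_le:
  assumes "is_walk E xs" "hd xs = u" "last xs = v"
  shows "gdist E u v \<le> length xs - 1"
  unfolding gdist_def
  by (rule Least_le) (use assms in \<open>auto simp: is_walk_def intro!: exI[of _ xs]\<close>)

lemma gdist_ex:
  assumes "\<exists>xs. is_walk E xs \<and> hd xs = u \<and> last xs = v"
  shows "\<exists>xs. is_walk E xs \<and> hd xs = u \<and> last xs = v \<and> length xs = Suc (gdist E u v)"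
proof -
  from assms obtain xs where xs: "is_walk E xs" "hd xs = u" "last xs = v" by blast
  then have "\<exists>n. \<exists>xs. is_walk E xs \<and> hd xs = u \<and> last xs = v \<and> length xs = Suc n"
    by (intro exI[of _ "length xs - 1"] exI[of _ xs]) (auto simp: is_walk_def)
  then show ?thesis unfolding gdist_def by (rule LeastI_ex)
qed

lemma gdist_refl: "gdist E u u = 0"
  using gdist_le[of E "[u]" u u] by (simp add: is_walk_def)

lemma gdist_pos:
  assumes "u \<noteq> v" "\<exists>xs. is_walk E xs \<and> hd xs = u \<and> last xs = v"
  shows "gdist E u v \<noteq> 0"
proof
  assume "gdist E u v = 0"
  with gdist_ex[OF assms(2)] obtain xs where "hd xs = u" "last xs = v" "length xs = 1" by auto
  then show False using assms(1) by (cases xs) auto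
qed

lemma gdist_edge:
  assumes "E u v"
  shows "gdist E u v \<le> 1"
proof -
  have "is_walk E [u, v]" using assms by (auto simp: is_walk_def nth_Cons split: nat.splits)
  then show ?thesis using gdist_le[of E "[u,v]" u v] by simp
qed

lemma gdist_one:
  assumes "gdist E u v = 1" "\<exists>xs. is_walk E xs \<and> hd xs = u \<and> last xs = v"
  shows "E u v"
proof -
  from gdist_ex[OF assms(2)] assms(1) obtain xs where xs: "is_walk E xs" "hd xs = u" "last xs = v" "length xs = 2" by auto
  then obtain a b where ab: "xs = [a, b]" by (auto simp: numeral_2_eq_2 length_Suc_conv)
  then have "E a b" using xs(1) by (auto simp: is_walk_def)
  then show ?thesis using ab xs by simp
qed

lemma gdist_twin:
  assumes sg: "simple_graph V E" and tw: "twins V E u v" and "t \<noteq> v" "t \<noteq> u"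
    and r: "\<exists>xs. is_walk E xs \<and> hd xs = v \<and> last xs = t"
  shows "gdist E u t \<le> gdist E v t"
proof -
  from gdist_ex[OF r] obtain xs where xs: "is_walk E xs" "hd xs = v" "last xs = t"
    "length xs = Suc (gdist E v t)" by blast
  then obtain ys where xs_eq: "xs = v # ys" by (cases xs) auto
  have "ys \<noteq> []" using xs xs_eq \<open>t \<noteq> v\<close> by auto
  then obtain z zs where ys: "ys = z # zs" by (cases ys) auto
  have Evz: "E v z" using xs(1) unfolding xs_eq ys is_walk_def by (metis length_Cons nth_Cons_0 nth_Cons_Suc zero_less_Suc Suc_less_eq)
  have wys: "is_walk E ys"
    using xs(1) \<open>ys \<noteq> []\<close> unfolding xs_eq is_walk_def by (metis length_Cons nth_Cons_Suc Suc_less_eq)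
  have lys: "last ys = t" using xs xs_eq \<open>ys \<noteq> []\<close> by simp
  show ?thesis
  proof (cases "z = u")
    case True
    have "gdist E u t \<le> length ys - 1" using gdist_le[OF wys] ys True lys by simp
    then show ?thesis using xs(4) xs_eq by simp
  next
    case False
    have "z \<in> nbhd V E v - {u}" using Evz False sg unfolding nbhd_def simple_graph_def by auto
    then have "z \<in> nbhd V E u" using tw unfolding twins_def by auto
    then have Euz: "E u z" by (simp add: nbhd_def)
    have "is_walk E (u # ys)" using wys Euz unfolding is_walk_def ys
      by (auto simp: nth_Cons split: nat.splits)
    then have "gdist E u t \<le> length (u # ys) - 1" using gdist_le[of E "u # ys" u t] lys \<open>ys \<noteq> []\<close> by simp
    then show ?thesis using xs(4) xs_eq by simp
  qed
qed

lemma setdist_zero: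
  assumes R: "\<forall>a\<in>V. \<forall>b\<in>V. \<exists>xs. is_walk E xs \<and> hd xs = a \<and> last xs = b"
    and "finite S" "S \<noteq> {}" "S \<subseteq> V" "u \<in> V"
  shows "setdist E u S = 0 \<longleftrightarrow> u \<in> S"
proof
  assume "setdist E u S = 0"
  then have "0 \<in> gdist E u ` S" unfolding setdist_def using assms Min_in[of "gdist E u ` S"] by (metis finite_imageI image_is_empty)
  then obtain s where "s \<in> S" "gdist E u s = 0" by auto
  then show "u \<in> S" using gdist_pos[of u s E] R assms by (metis subsetD)
next
  assume "u \<in> S"
  then have "setdist E u S \<le> gdist E u u" unfolding setdist_def using assms by (intro Min_le) auto
  then show "setdist E u S = 0" by (simp add: gdist_refl)
qed

lemma setdist_one:
  assumes R: "\<forall>a\<in>V. \<forall>b\<in>V. \<exists>xs. is_walk E xs \<and> hd xs = a \<and> last xs = b"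
    and "finite S" "S \<noteq> {}" "S \<subseteq> V" "u \<in> V" "u \<notin> S"
  shows "setdist E u S = 1 \<longleftrightarrow> (\<exists>s\<in>S. E u s)"
proof
  assume "setdist E u S = 1"
  then have "1 \<in> gdist E u ` S" unfolding setdist_def using assms Min_in[of "gdist E u ` S"] by (metis finite_imageI image_is_empty)
  then obtain s where "s \<in> S" "gdist E u s = 1" by auto
  then show "\<exists>s\<in>S. E u s" using gdist_one[of E u s] R assms by (meson subsetD)
next
  assume "\<exists>s\<in>S. E u s"
  then obtain s where s: "s \<in> S" "E u s" by blast
  then have "setdist E u S \<le> gdist E u s" unfolding setdist_def using assms by (intro Min_le) auto
  also have "\<dots> \<le> 1" using gdist_edge[of E u s, OF s(2)] .
  finally show "setdist E u S = 1" using setdist_zero[OF assms(1-5)] assms(6) by simp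
qed

theorem proposition17:
  fixes V :: "'a set" and E :: "'a \<Rightarrow> 'a \<Rightarrow> bool" and W :: "'a set"
  assumes "connected_graph V E"
    and "2 * twin_number V E > card V"
    and "tau_set V E W"
    and "\<forall>u\<in>W. \<forall>v\<in>W. \<not> E u v"
  shows "partition_dimension V E = twin_number V E"
proof -
  define \<tau> where "\<tau> = twin_number V E"
  have sg: "simple_graph V E" and R: "\<forall>a\<in>V. \<forall>b\<in>V. \<exists>xs. is_walk E xs \<and> hd xs = a \<and> last xs = b"
    using assms(1) unfolding connected_graph_def by auto
  have finV: "finite V" and Ein: "\<And>u v. E u v \<Longrightarrow> u \<in> V \<and> v \<in> V"
    and Esym: "\<And>u v. E u v \<Longrightarrow> E v u" and Eirr: "\<And>u. \<not> E u u"
    using sg unfolding simple_graph_def by auto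
  have WV: "W \<subseteq> V" and twW: "\<And>u v. u \<in> W \<Longrightarrow> v \<in> W \<Longrightarrow> twins V E u v" and cW: "card W = \<tau>"
    using assms(3) unfolding tau_set_def \<tau>_def by auto
  have ind: "\<And>u v. u \<in> W \<Longrightarrow> v \<in> W \<Longrightarrow> \<not> E u v" using assms(4) by auto
  have finW: "finite W" using WV finV finite_subset by blast
  have Wne: "W \<noteq> {}" using cW assms(2) \<tau>_def by auto
  have notwin: "\<And>w x. w \<in> W \<Longrightarrow> x \<in> V - W \<Longrightarrow> \<not> twins V E w x"
  proof
    fix w x assume w: "w \<in> W" and x: "x \<in> V - W" and t: "twins V E w x"
    have "insert x W \<subseteq> twin_class V E w" using twW[OF w] t WV x unfolding twin_class_def by auto
    moreover have "finite (twin_class V E w)" using finV unfolding twin_class_def by auto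
    ultimately have "card (insert x W) \<le> card (twin_class V E w)" by (rule card_mono[rotated])
    also have "\<dots> \<le> \<tau>" unfolding \<tau>_def twin_number_def using finV w WV by (intro Max_ge) auto
    finally show False using cW finW x by simp
  qed
  have sameN: "\<And>w1 w2 y. w1 \<in> W \<Longrightarrow> w2 \<in> W \<Longrightarrow> E w1 y \<Longrightarrow> E w2 y"
  proof -
    fix w1 w2 y assume w: "w1 \<in> W" "w2 \<in> W" and e: "E w1 y"
    show "E w2 y"
    proof (cases "w1 = w2")
      case False
      have "y \<in> nbhd V E w1 - {w2}" using e Ein ind[OF w] unfolding nbhd_def by auto
      then have "y \<in> nbhd V E w2" using twW[OF w(2) w(1)] unfolding twins_def by auto
      then show ?thesis by (simp add: nbhd_def)
    qed (use e in auto)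
  qed
  have lower: "\<tau> \<le> card P" if loc: "locating_partition V E P" for P
  proof -
    have ne: "\<And>S. S \<in> P \<Longrightarrow> S \<noteq> {}" and un: "\<Union>P = V"
      and dj: "\<And>S T. S \<in> P \<Longrightarrow> T \<in> P \<Longrightarrow> S \<noteq> T \<Longrightarrow> S \<inter> T = {}"
      using loc unfolding locating_partition_def is_partition_def by auto
    have dist: "\<And>u v. u \<in> V \<Longrightarrow> v \<in> V \<Longrightarrow> u \<noteq> v \<Longrightarrow> rep E P u \<noteq> rep E P v"
      using loc unfolding locating_partition_def by auto
    have "P \<subseteq> Pow V" using un by auto
    then have finP: "finite P" using finV finite_subset by blast
    define g where "g w = (SOME S. S \<in> P \<and> w \<in> S)" for w
    have g: "g w \<in> P \<and> w \<in> g w" if "w \<in> W" for w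
    proof -
      have "w \<in> \<Union>P" using that WV un by auto
      then have "\<exists>S. S \<in> P \<and> w \<in> S" by blast
      then show ?thesis unfolding g_def by (rule someI_ex)
    qed
    have "inj_on g W"
    proof
      fix w1 w2 assume w: "w1 \<in> W" "w2 \<in> W" and eq: "g w1 = g w2"
      show "w1 = w2"
      proof (rule ccontr)
        assume neq: "w1 \<noteq> w2"
        define S where "S = g w1"
        have S: "S \<in> P" "w1 \<in> S" "w2 \<in> S" using g[OF w(1)] g[OF w(2)] eq unfolding S_def by simp_all
        have "rep E P w1 = rep E P w2"
        proof
          fix T
          show "rep E P w1 T = rep E P w2 T"
          proof (cases "T \<in> P")
            case True
            have TV1: "T \<subseteq> V" using True un by blast
            have TV: "T \<subseteq> V" "finite T" using TV1 finite_subset[OF TV1 finV] by simp_all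
            show ?thesis
            proof (cases "T = S")
              case True
              have wV2: "w1 \<in> V" "w2 \<in> V" using w WV by auto
              have "setdist E w1 T = 0" "setdist E w2 T = 0"
                using setdist_zero[OF R TV(2) ne[OF \<open>T \<in> P\<close>] TV(1) wV2(1)]
                  setdist_zero[OF R TV(2) ne[OF \<open>T \<in> P\<close>] TV(1) wV2(2)] S True by simp_all
              then show ?thesis unfolding rep_def by simp
            next
              case False
              then have nt: "w1 \<notin> T" "w2 \<notin> T" using dj[OF \<open>T \<in> P\<close> S(1) False] S by auto
              have "gdist E w1 t = gdist E w2 t" if "t \<in> T" for t
              proof -
                have tV: "t \<in> V" using that TV by auto
                have ne1: "t \<noteq> w1" "t \<noteq> w2" using nt that by auto
                have r1: "\<exists>xs. is_walk E xs \<and> hd xs = w2 \<and> last xs = t"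
                  and r2: "\<exists>xs. is_walk E xs \<and> hd xs = w1 \<and> last xs = t" using R tV w WV by blast+
                show ?thesis
                  using gdist_twin[OF sg twW[OF w(1) w(2)] ne1(2) ne1(1) r1]
                    gdist_twin[OF sg twW[OF w(2) w(1)] ne1(1) ne1(2) r2] by simp
              qed
              then have "gdist E w1 ` T = gdist E w2 ` T" by (rule image_cong[OF refl])
              then show ?thesis unfolding rep_def setdist_def by simp
            qed
          qed (simp add: rep_def)
        qed
        then show False using dist neq w WV by auto
      qed
    qed
    moreover have "g ` W \<subseteq> P" using g by auto
    ultimately have "card W \<le> card P" using finP by (rule card_inj_on_le)
    then show ?thesis using cW by simp
  qed
  define X where "X = V - W"
  have finX: "finite X" using finV X_def by auto
  have "card X = card V - card W" unfolding X_def using card_Diff_subset[OF finW WV] .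
  then have cX: "card X < card W" using assms(2) cW \<tau>_def by simp
  obtain f where fX: "f ` X \<subseteq> W" and finj: "inj_on f X"
    using card_le_inj[OF finX finW] cX by auto
  have "card (f ` X) < card W" using card_image[OF finj] cX by simp
  then have "f ` X \<noteq> W" by auto
  then obtain w0 where w0: "w0 \<in> W" "w0 \<notin> f ` X" using fX by blast
  define C where "C w = insert w {x \<in> X. f x = w}" for w
  define P where "P = C ` W"
  have CW: "C w \<inter> W = {w}" if "w \<in> W" for w using that unfolding C_def X_def by auto
  have CV: "C w \<subseteq> V" if "w \<in> W" for w using that WV unfolding C_def X_def by auto
  have injC: "inj_on C W"
  proof
    fix w1 w2 assume "w1 \<in> W" "w2 \<in> W" "C w1 = C w2"
    moreover have "w1 \<in> C w1" unfolding C_def by simp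
    ultimately have "w1 \<in> C w2 \<inter> W" by simp
    then show "w1 = w2" using CW[OF \<open>w2 \<in> W\<close>] by simp
  qed
  have cP: "card P = \<tau>" unfolding P_def using card_image[OF injC] cW by simp
  have finP: "finite P" unfolding P_def using finW by simp
  have part: "is_partition V P"
    unfolding is_partition_def
  proof (intro conjI ballI impI)
    show "\<Union>P = V"
    proof
      show "\<Union>P \<subseteq> V" using CV unfolding P_def by auto
      show "V \<subseteq> \<Union>P"
      proof
        fix v assume v: "v \<in> V"
        show "v \<in> \<Union>P"
        proof (cases "v \<in> W")
          case True then show ?thesis unfolding P_def C_def by auto
        next
          case False
          then have "v \<in> X" "f v \<in> W" using v fX X_def by auto
          then show ?thesis unfolding P_def C_def by auto
        qed
      qed
    qed
  next
    fix S assume "S \<in> P" then show "S \<noteq> {}" unfolding P_def C_def by auto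
  next
    fix S T assume "S \<in> P" "T \<in> P" "S \<noteq> T"
    then show "S \<inter> T = {}" unfolding P_def C_def X_def by auto
  qed
  have repP: "\<And>S u. S \<in> P \<Longrightarrow> rep E P u S = setdist E u S" unfolding rep_def by simp
  have SV: "\<And>S. S \<in> P \<Longrightarrow> S \<subseteq> V \<and> finite S \<and> S \<noteq> {}"
  proof -
    fix S assume "S \<in> P"
    then obtain w where w: "w \<in> W" "S = C w" unfolding P_def by auto
    have "S \<subseteq> V" using CV[OF w(1)] w(2) by simp
    moreover have "finite S" using calculation finV finite_subset by blast
    moreover have "S \<noteq> {}" using w(2) unfolding C_def by simp
    ultimately show "S \<subseteq> V \<and> finite S \<and> S \<noteq> {}" by simp
  qed
  have diffcls: "rep E P u \<noteq> rep E P v" if "u \<in> V" "v \<in> V" "S \<in> P" "u \<in> S" "v \<notin> S" for u v S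
  proof
    assume "rep E P u = rep E P v"
    then have "rep E P u S = rep E P v S" by simp
    then have "setdist E u S = setdist E v S" using repP[OF that(3)] by simp
    moreover have S: "S \<subseteq> V" "finite S" "S \<noteq> {}" using SV[OF that(3)] by simp_all
    moreover have "setdist E u S = 0" using setdist_zero[OF R S(2) S(3) S(1) that(1)] that(4) by simp
    moreover have "setdist E v S \<noteq> 0" using setdist_zero[OF R S(2) S(3) S(1) that(2)] that(5) by simp
    ultimately show False by simp
  qed
  have pair: "rep E P w \<noteq> rep E P x" if w: "w \<in> W" and x: "x \<in> X" and fxw: "f x = w" for w x
  proof -
    have xV: "x \<in> V" "x \<notin> W" using x X_def by auto
    have wV: "w \<in> V" using w WV by auto
    show ?thesis
    proof (cases "E w x")
      case True
      have C0: "C w0 = {w0}" using w0 unfolding C_def by auto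
      have S: "C w0 \<in> P" using w0 P_def by auto
      have "w0 \<noteq> w" using w0 fxw x by auto
      have w0V: "{w0} \<subseteq> V" using w0 WV by auto
      have "E x w0" using sameN[OF w w0(1) True] Esym by blast
      then have d1: "setdist E x {w0} = 1"
        using setdist_one[OF R, where S="{w0}" and u=x] w0V xV w0 by auto
      have d2: "setdist E w {w0} \<noteq> 1"
        using setdist_one[OF R, where S="{w0}" and u=w] w0V wV ind[OF w w0(1)] \<open>w0 \<noteq> w\<close> by auto
      have "rep E P x (C w0) \<noteq> rep E P w (C w0)" using d1 d2 repP[OF S] C0 by simp
      then show ?thesis by metis
    next
      case False
      have nx: "\<And>w'. w' \<in> W \<Longrightarrow> \<not> E x w'" using sameN[OF _ w] False Esym by blast
      have "nbhd V E w - {x} \<noteq> nbhd V E x - {w}" using notwin[OF w] xV wV unfolding twins_def by auto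
      then obtain y where y: "y \<in> V" "E w y \<noteq> E x y" using Eirr unfolding nbhd_def by auto
      have yW: "y \<notin> W" using y ind[OF w] nx by auto
      have yx: "y \<noteq> x" using y False Eirr by auto
      have yX: "y \<in> X" using y yW X_def by auto
      have fy: "f y \<in> W" "f y \<noteq> w" using fX yX finj fxw x yx by (auto dest: inj_onD)
      have Cy: "C (f y) = {f y, y}" using finj yX unfolding C_def by (auto dest: inj_onD)
      have S: "C (f y) \<in> P" using fy P_def by auto
      have fyV: "{f y, y} \<subseteq> V" using fy y WV by auto
      have d1: "setdist E w {f y, y} = 1 \<longleftrightarrow> E w y"
        using setdist_one[OF R, where S="{f y, y}" and u=w] fyV fy yW wV w ind[OF w fy(1)] by auto
      have d2: "setdist E x {f y, y} = 1 \<longleftrightarrow> E x y"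
        using setdist_one[OF R, where S="{f y, y}" and u=x] fyV nx[OF fy(1)] xV yx fy by auto
      have "rep E P w (C (f y)) \<noteq> rep E P x (C (f y))" using d1 d2 y(2) repP[OF S] Cy by auto
      then show ?thesis by metis
    qed
  qed
  have loc: "locating_partition V E P"
    unfolding locating_partition_def
  proof (intro conjI ballI impI part)
    fix u v assume u: "u \<in> V" and v: "v \<in> V" and uv: "u \<noteq> v"
    define c where "c = (if u \<in> W then C u else C (f u))"
    have cP: "c \<in> P" "u \<in> c" using u fX unfolding c_def P_def C_def X_def by auto
    show "rep E P u \<noteq> rep E P v"
    proof (cases "v \<in> c")
      case False then show ?thesis using diffcls[OF u v cP(1) cP(2)] by simp
    next
      case True
      show ?thesis
      proof (cases "u \<in> W")
        case True
        then have "v \<in> X" "f v = u" using \<open>v \<in> c\<close> uv unfolding c_def C_def by auto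
        then show ?thesis using pair[OF True] by blast
      next
        case False
        then have uX: "u \<in> X" using u X_def by auto
        have "v = f u" using \<open>v \<in> c\<close> False finj uX uv unfolding c_def C_def by (auto dest: inj_onD)
        then show ?thesis using pair[OF _ uX] fX uX by (metis image_subset_iff)
      qed
    qed
  qed
  have "partition_dimension V E = \<tau>"
    unfolding partition_dimension_def
  proof (rule Least_equality)
    show "\<exists>P. locating_partition V E P \<and> card P = \<tau>" using loc cP by blast
  next
    fix k assume "\<exists>P. locating_partition V E P \<and> card P = k"
    then show "\<tau> \<le> k" using lower by blast
  qed
  then show ?thesis by (simp add: \<tau>_def)
qed

end
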